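(* Let $X,Y,Z$ be random variables on finite alphabets $\mathcal{X},\mathcal{Y},\mathcal{Z}$, and define the redundant information $\operatorname{Red}(X,Y\to Z)=I(X;Z)-\operatorname{Un}(X\to Z\mid Y)$ with $\operatorname{Un}$ as below. Then $\operatorname{Red}(X,Y\to Z)\ge 0$.
   Context: For each $y\in\mathcal{Y}$ with $\Pr(Y=y)>0$, let $(A_y,B_y,C_y)$ be the random triple on $\mathcal{X}\times\mathcal{Y}\times\mathcal{Z}$ with $\Pr(A_y=x,B_y=y',C_y=z)=0$ if $\Pr(Z=z)=0$ and $\Pr(A_y=x,B_y=y',C_y=z)=\Pr(X=x,Y=y',Z=z)\Pr(Z=z\mid Y=y)/\Pr(Z=z)$ otherwise. The unique information is $\operatorname{Un}(X\to Z\mid Y)=\sum_{y:\Pr(Y=y)>0}\Pr(Y=y)\,I(A_y;C_y)$, where $I$ is mutual information. *)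

theory Defs
  imports "HOL-Probability.Probability"
begin

definition PY :: "('x::finite \<times> 'y::finite \<times> 'z::finite) pmf \<Rightarrow> 'y \<Rightarrow> real" where
  "PY p y = (\<Sum>x\<in>UNIV. \<Sum>z\<in>UNIV. pmf p (x, y, z))"

definition PZ :: "('x::finite \<times> 'y::finite \<times> 'z::finite) pmf \<Rightarrow> 'z \<Rightarrow> real" where
  "PZ p z = (\<Sum>x\<in>UNIV. \<Sum>y\<in>UNIV. pmf p (x, y, z))"

definition PYZ :: "('x::finite \<times> 'y::finite \<times> 'z::finite) pmf \<Rightarrow> 'y \<Rightarrow> 'z \<Rightarrow> real" where
  "PYZ p y z = (\<Sum>x\<in>UNIV. pmf p (x, y, z))"

definition PXZ :: "('x::finite \<times> 'y::finite \<times> 'z::finite) pmf \<Rightarrow> 'x \<Rightarrow> 'z \<Rightarrow> real" where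
  "PXZ p x z = (\<Sum>y\<in>UNIV. pmf p (x, y, z))"

definition PZ_given_Y :: "('x::finite \<times> 'y::finite \<times> 'z::finite) pmf \<Rightarrow> 'z \<Rightarrow> 'y \<Rightarrow> real" where
  "PZ_given_Y p z y = PYZ p y z / PY p y"

definition mutual_info :: "('a::finite \<times> 'c::finite \<Rightarrow> real) \<Rightarrow> real" where
  "mutual_info q = (\<Sum>a\<in>UNIV. \<Sum>c\<in>UNIV.
      (if q (a, c) = 0 then 0
       else q (a, c) * log 2 (q (a, c) / ((\<Sum>c'\<in>UNIV. q (a, c')) * (\<Sum>a'\<in>UNIV. q (a', c))))))"

text \<open>Mass function of the triple (A_y, B_y, C_y).\<close>
definition triple_y :: "('x::finite \<times> 'y::finite \<times> 'z::finite) pmf \<Rightarrow> 'y \<Rightarrow> 'x \<times> 'y \<times> 'z \<Rightarrow> real" where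
  "triple_y p y t = (case t of (x, y', z) \<Rightarrow>
      if PZ p z = 0 then 0 else pmf p (x, y', z) * PZ_given_Y p z y / PZ p z)"

definition unique_info :: "('x::finite \<times> 'y::finite \<times> 'z::finite) pmf \<Rightarrow> real" where
  "unique_info p = (\<Sum>y\<in>{y. PY p y > 0}.
      PY p y * mutual_info (\<lambda>(x, z). \<Sum>y'\<in>UNIV. triple_y p y (x, y', z)))"

definition Red :: "('x::finite \<times> 'y::finite \<times> 'z::finite) pmf \<Rightarrow> real" where
  "Red p = mutual_info (\<lambda>(x, z). PXZ p x z) - unique_info p"

end

theory Submission
  imports Defs
begin

definition PXm :: "('x::finite \<times> 'y::finite \<times> 'z::finite) pmf \<Rightarrow> 'x \<Rightarrow> real" where
  "PXm p x = (\<Sum>z\<in>UNIV. PXZ p x z)"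

definition rr :: "('x::finite \<times> 'y::finite \<times> 'z::finite) pmf \<Rightarrow> 'y \<Rightarrow> 'x \<Rightarrow> real" where
  "rr p y x = (\<Sum>z\<in>UNIV. PXZ p x z * PYZ p y z / (PZ p z * PY p y))"

lemma nn: "0 \<le> PXZ p x z" "0 \<le> PYZ p y z" "0 \<le> PY p y" "0 \<le> PZ p z" "0 \<le> PXm p x"
  unfolding PXZ_def PYZ_def PY_def PZ_def PXm_def by (auto intro!: sum_nonneg)

lemma PZ_x: "PZ p z = (\<Sum>x\<in>UNIV. PXZ p x z)"
  unfolding PZ_def PXZ_def by simp

lemma PZ_y: "PZ p z = (\<Sum>y\<in>UNIV. PYZ p y z)"
  unfolding PZ_def PYZ_def by (rule sum.swap)

lemma PY_z: "PY p y = (\<Sum>z\<in>UNIV. PYZ p y z)"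
  unfolding PY_def PYZ_def by (rule sum.swap)

lemma total3:
  fixes p :: "('x::finite \<times> 'y::finite \<times> 'z::finite) pmf"
  shows "(\<Sum>x\<in>UNIV. \<Sum>y\<in>UNIV. \<Sum>z\<in>UNIV. pmf p (x, y, z)) = 1"
proof -
  have "(\<Sum>x\<in>UNIV. \<Sum>y\<in>UNIV. \<Sum>z\<in>UNIV. pmf p (x, y, z)) = (\<Sum>t\<in>UNIV. pmf p t)"
    by (simp add: sum.cartesian_product UNIV_Times_UNIV[symmetric] del: UNIV_Times_UNIV)
  also have "\<dots> = 1" by (rule sum_pmf_eq_1) auto
  finally show ?thesis .
qed

lemma totXZ:
  fixes p :: "('x::finite \<times> 'y::finite \<times> 'z::finite) pmf"
  shows "(\<Sum>x\<in>UNIV. \<Sum>z\<in>UNIV. PXZ p x z) = 1"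
proof -
  have "\<And>x. (\<Sum>z\<in>UNIV. PXZ p x z) = (\<Sum>y\<in>UNIV. \<Sum>z\<in>UNIV. pmf p (x, y, z))"
    unfolding PXZ_def by (rule sum.swap)
  then show ?thesis using total3[of p] by simp
qed

lemma totY:
  fixes p :: "('x::finite \<times> 'y::finite \<times> 'z::finite) pmf"
  shows "(\<Sum>y\<in>UNIV. PY p y) = 1"
  unfolding PY_def using total3[of p] by (subst sum.swap) simp

lemma le1: "PXZ p x z \<le> PZ p z"
  unfolding PZ_x by (rule member_le_sum) (auto simp: nn)
lemma le2: "PXZ p x z \<le> PXm p x"
  unfolding PXm_def by (rule member_le_sum) (auto simp: nn)
lemma le3: "PYZ p y z \<le> PY p y"
  unfolding PY_z by (rule member_le_sum) (auto simp: nn)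
lemma le4: "PYZ p y z \<le> PZ p z"
  unfolding PZ_y by (rule member_le_sum) (auto simp: nn)


lemma ifz: "(if (q::real) = 0 then 0 else q * L) = q * L" by simp

lemma T0:
  fixes p :: "('x::finite \<times> 'y::finite \<times> 'z::finite) pmf"
  shows "mutual_info (\<lambda>(x,z). PXZ p x z) =
    (\<Sum>x\<in>UNIV. \<Sum>z\<in>UNIV. PXZ p x z * log 2 (PXZ p x z / (PXm p x * PZ p z)))"
  unfolding mutual_info_def prod.case by (simp add: PXm_def PZ_x ifz)

lemma qy:
  fixes p :: "('x::finite \<times> 'y::finite \<times> 'z::finite) pmf"
  shows "(\<Sum>y'\<in>UNIV. triple_y p y (x,y',z)) = PXZ p x z * PYZ p y z / (PZ p z * PY p y)"
proof (cases "PZ p z = 0")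
  case True
  then show ?thesis unfolding triple_y_def by simp
next
  case False
  then show ?thesis unfolding triple_y_def PZ_given_Y_def PXZ_def
    apply (simp add: sum_divide_distrib sum_distrib_right)
    apply (rule sum.cong)
     apply simp
    apply (simp add: mult.commute)
    done
qed

lemma col:
  fixes p :: "('x::finite \<times> 'y::finite \<times> 'z::finite) pmf"
  shows "(\<Sum>x\<in>UNIV. PXZ p x z * PYZ p y z / (PZ p z * PY p y)) = PYZ p y z / PY p y"
proof (cases "PZ p z = 0")
  case True
  then have "PYZ p y z = 0" using le4[of p y z] nn(2)[of p y z] by simp
  then show ?thesis by simp
next
  case False
  have "(\<Sum>x\<in>UNIV. PXZ p x z * PYZ p y z / (PZ p z * PY p y))
      = (\<Sum>x\<in>UNIV. PXZ p x z) * PYZ p y z / (PZ p z * PY p y)"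
    by (simp add: sum_divide_distrib sum_distrib_right)
  also have "\<dots> = PYZ p y z / PY p y" using False by (simp add: PZ_x[symmetric])
  finally show ?thesis .
qed

lemma term_eq:
  fixes a b Z Y r L :: real
  assumes "Y > 0"
  shows "Y * (if a * b / (Z * Y) = 0 then 0
            else a * b / (Z * Y) * log 2 (a * b / (Z * Y) / (r * (b / Y))))
       = a * b / Z * log 2 (a / (Z * r))"
proof (cases "a * b / Z = 0")
  case True
  then show ?thesis using assms by auto
next
  case False
  then have nz: "a \<noteq> 0" "b \<noteq> 0" "Z \<noteq> 0" by auto
  have e: "a * b / (Z * Y) / (r * (b / Y)) = a / (Z * r)"
    using nz assms by (cases "r = 0") (auto simp: field_simps)
  show ?thesis using nz assms unfolding e by (auto simp: field_simps)
qed

lemma Uy: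
  fixes p :: "('x::finite \<times> 'y::finite \<times> 'z::finite) pmf"
  assumes "PY p y > 0"
  shows "PY p y * mutual_info (\<lambda>(x, z). \<Sum>y'\<in>UNIV. triple_y p y (x, y', z)) =
    (\<Sum>x\<in>UNIV. \<Sum>z\<in>UNIV. PXZ p x z * PYZ p y z / PZ p z * log 2 (PXZ p x z / (PZ p z * rr p y x)))"
  unfolding mutual_info_def prod.case
  by (simp only: qy col rr_def[symmetric] sum_distrib_left term_eq[OF assms])


lemma pt:
  fixes a b Z P r :: real
  assumes "0 \<le> a" "0 \<le> b" "0 \<le> Z" "a \<le> P" "a > 0 \<Longrightarrow> b > 0 \<Longrightarrow> Z > 0 \<Longrightarrow> r > 0"
  shows "(a * b / Z - a * b / Z * (P / r)) / ln 2 \<le>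
     a * b / Z * log 2 (a / (P * Z)) - a * b / Z * log 2 (a / (Z * r))"
proof (cases "a = 0 \<or> b = 0 \<or> Z = 0")
  case True
  then show ?thesis by auto
next
  case False
  then have pos: "a > 0" "b > 0" "Z > 0" "P > 0" "r > 0" using assms by auto
  have "log 2 (a / (P * Z)) - log 2 (a / (Z * r)) = ln (r / P) / ln 2"
    using pos apply (simp add: log_def ln_div ln_mult)
    apply (simp add: add_divide_distrib diff_divide_distrib)
    done
  moreover have "ln (r / P) \<ge> 1 - P / r"
  proof -
    have "ln (P / r) \<le> P / r - 1" using pos by (intro ln_le_minus_one) simp
    moreover have "ln (r / P) = - ln (P / r)" using pos by (simp add: ln_div)
    ultimately show ?thesis by simp
  qed
  moreover have "a * b / Z > 0" using pos by simp
  ultimately have "a * b / Z * (1 - P / r) \<le> a * b / Z * ln (r / P)"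
    by (intro mult_left_mono) auto
  then have "a * b / Z * (1 - P / r) / ln 2 \<le> a * b / Z * ln (r / P) / ln 2"
    by (rule divide_right_mono) simp
  then have "a * b / Z * (1 - P / r) / ln 2 \<le> a * b / Z * (log 2 (a / (P * Z)) - log 2 (a / (Z * r)))"
    using \<open>log 2 (a / (P * Z)) - log 2 (a / (Z * r)) = ln (r / P) / ln 2\<close> by simp
  moreover have "a * b / Z - a * b / Z * (P / r) = a * b / Z * (1 - P / r)"
    by (simp add: right_diff_distrib)
  moreover have "a * b / Z * log 2 (a / (P * Z)) - a * b / Z * log 2 (a / (Z * r))
     = a * b / Z * (log 2 (a / (P * Z)) - log 2 (a / (Z * r)))"
    by (simp add: right_diff_distrib)
  ultimately show ?thesis by simp
qed

theorem corollary3: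
  fixes p :: "('x::finite \<times> 'y::finite \<times> 'z::finite) pmf"
  shows "0 \<le> Red p"
proof -
  define S where "S = {y. PY p y > 0}"
  have fS: "finite S" by simp
  have out: "y \<notin> S \<Longrightarrow> PYZ p y z = 0" for y z
    using le3[of p y z] nn(2)[of p y z] nn(3)[of p y] unfolding S_def by auto
  have bS: "(\<Sum>y\<in>S. PYZ p y z) = PZ p z" for z
    unfolding PZ_y by (rule sum.mono_neutral_left) (auto simp: out)
  have YS: "(\<Sum>y\<in>S. PY p y) = 1"
    using totY[of p] by (subst (asm) sum.mono_neutral_left[of UNIV S, symmetric]) (auto simp: S_def less_le nn)
  define g where "g y x z = PXZ p x z * PYZ p y z / PZ p z * log 2 (PXZ p x z / (PZ p z * rr p y x))" for y x z
  define h where "h x z = PXZ p x z * log 2 (PXZ p x z / (PXm p x * PZ p z))" for x z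
  define k where "k y x z = (PXZ p x z * PYZ p y z / PZ p z
      - PXZ p x z * PYZ p y z / PZ p z * (PXm p x / rr p y x)) / ln 2" for y x z
  have U: "unique_info p = (\<Sum>x\<in>UNIV. \<Sum>z\<in>UNIV. \<Sum>y\<in>S. g y x z)"
  proof -
    have "unique_info p = (\<Sum>y\<in>S. \<Sum>x\<in>UNIV. \<Sum>z\<in>UNIV. g y x z)"
      unfolding unique_info_def S_def[symmetric] g_def
      by (rule sum.cong) (auto simp: S_def Uy)
    also have "\<dots> = (\<Sum>x\<in>UNIV. \<Sum>y\<in>S. \<Sum>z\<in>UNIV. g y x z)" by (rule sum.swap)
    also have "\<dots> = (\<Sum>x\<in>UNIV. \<Sum>z\<in>UNIV. \<Sum>y\<in>S. g y x z)"
      by (rule sum.cong) (auto intro: sum.swap)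
    finally show ?thesis .
  qed
  have R: "Red p = (\<Sum>x\<in>UNIV. \<Sum>z\<in>UNIV. h x z - (\<Sum>y\<in>S. g y x z))"
    unfolding Red_def U T0 h_def by (simp add: sum_subtractf)
  have hS: "h x z = (\<Sum>y\<in>S. PXZ p x z * PYZ p y z / PZ p z * log 2 (PXZ p x z / (PXm p x * PZ p z)))" for x z
  proof (cases "PZ p z = 0")
    case True
    then have "PXZ p x z = 0" using le1[of p x z] nn(1)[of p x z] by simp
    then show ?thesis unfolding h_def by simp
  next
    case False
    have "(\<Sum>y\<in>S. PXZ p x z * PYZ p y z / PZ p z * log 2 (PXZ p x z / (PXm p x * PZ p z)))
       = PXZ p x z * (\<Sum>y\<in>S. PYZ p y z) / PZ p z * log 2 (PXZ p x z / (PXm p x * PZ p z))"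
      by (simp add: sum_distrib_left sum_distrib_right sum_divide_distrib)
    also have "\<dots> = h x z" using False unfolding bS h_def by simp
    finally show ?thesis by simp
  qed
  have rpos: "PXZ p x z > 0 \<Longrightarrow> PYZ p y z > 0 \<Longrightarrow> PZ p z > 0 \<Longrightarrow> y \<in> S \<Longrightarrow> rr p y x > 0" for x y z
  proof -
    assume a: "PXZ p x z > 0" "PYZ p y z > 0" "PZ p z > 0" "y \<in> S"
    then have "0 < PXZ p x z * PYZ p y z / (PZ p z * PY p y)" by (simp add: S_def)
    also have "\<dots> \<le> rr p y x" unfolding rr_def
      by (rule member_le_sum[where f = "\<lambda>z. PXZ p x z * PYZ p y z / (PZ p z * PY p y)"])
        (auto simp: nn)
    finally show ?thesis .
  qed
  have pw: "(\<Sum>y\<in>S. k y x z) \<le> h x z - (\<Sum>y\<in>S. g y x z)" for x z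
    unfolding hS sum_subtractf[symmetric]
    by (rule sum_mono) (unfold k_def g_def, rule pt, auto simp: nn le2 rpos)
  have A: "(\<Sum>x\<in>UNIV. \<Sum>z\<in>UNIV. \<Sum>y\<in>S. PXZ p x z * PYZ p y z / PZ p z) = 1"
  proof -
    have "(\<Sum>y\<in>S. PXZ p x z * PYZ p y z / PZ p z) = PXZ p x z" for x z
    proof (cases "PZ p z = 0")
      case True
      then have "PXZ p x z = 0" using le1[of p x z] nn(1)[of p x z] by simp
      then show ?thesis by simp
    next
      case False
      have "(\<Sum>y\<in>S. PXZ p x z * PYZ p y z / PZ p z) = PXZ p x z * (\<Sum>y\<in>S. PYZ p y z) / PZ p z"
        by (simp add: sum_distrib_left sum_divide_distrib)
      then show ?thesis using False by (simp add: bS)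
    qed
    then show ?thesis using totXZ[of p] by simp
  qed
  have B: "(\<Sum>x\<in>UNIV. \<Sum>z\<in>UNIV. \<Sum>y\<in>S. PXZ p x z * PYZ p y z / PZ p z * (PXm p x / rr p y x)) \<le> 1"
  proof -
    have zs: "(\<Sum>z\<in>UNIV. PXZ p x z * PYZ p y z / PZ p z) = PY p y * rr p y x" if "y \<in> S" for x y
      using that unfolding rr_def S_def by (simp add: sum_distrib_left)
    have "(\<Sum>x\<in>UNIV. \<Sum>z\<in>UNIV. \<Sum>y\<in>S. PXZ p x z * PYZ p y z / PZ p z * (PXm p x / rr p y x))
      = (\<Sum>x\<in>UNIV. \<Sum>y\<in>S. (\<Sum>z\<in>UNIV. PXZ p x z * PYZ p y z / PZ p z) * (PXm p x / rr p y x))"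
    proof (rule sum.cong[OF refl])
      fix x
      show "(\<Sum>z\<in>UNIV. \<Sum>y\<in>S. PXZ p x z * PYZ p y z / PZ p z * (PXm p x / rr p y x))
        = (\<Sum>y\<in>S. (\<Sum>z\<in>UNIV. PXZ p x z * PYZ p y z / PZ p z) * (PXm p x / rr p y x))"
        by (simp only: sum_distrib_right) (rule sum.swap)
    qed
    also have "\<dots> = (\<Sum>x\<in>UNIV. \<Sum>y\<in>S. PY p y * rr p y x * (PXm p x / rr p y x))"
      by (rule sum.cong) (auto simp: zs)
    also have "\<dots> \<le> (\<Sum>x\<in>UNIV. \<Sum>y\<in>S. PY p y * PXm p x)"
      by (rule sum_mono)+ (auto simp: nn)
    also have "\<dots> = (\<Sum>y\<in>S. PY p y) * (\<Sum>x\<in>UNIV. PXm p x)"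
      by (simp add: sum_distrib_left sum_distrib_right sum.swap[of _ UNIV S] mult.commute)
    also have "\<dots> = 1" using YS totXZ[of p] by (simp add: PXm_def)
    finally show ?thesis .
  qed
  have K: "0 \<le> (\<Sum>x\<in>UNIV. \<Sum>z\<in>UNIV. \<Sum>y\<in>S. k y x z)"
  proof -
    have "(\<Sum>x\<in>UNIV. \<Sum>z\<in>UNIV. \<Sum>y\<in>S. k y x z) =
      ((\<Sum>x\<in>UNIV. \<Sum>z\<in>UNIV. \<Sum>y\<in>S. PXZ p x z * PYZ p y z / PZ p z)
       - (\<Sum>x\<in>UNIV. \<Sum>z\<in>UNIV. \<Sum>y\<in>S. PXZ p x z * PYZ p y z / PZ p z * (PXm p x / rr p y x))) / ln 2"
      unfolding k_def by (simp only: sum_subtractf[symmetric] sum_divide_distrib)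
    then show ?thesis using A B by simp
  qed
  have "(\<Sum>x\<in>UNIV. \<Sum>z\<in>UNIV. \<Sum>y\<in>S. k y x z) \<le> Red p"
    unfolding R by (intro sum_mono pw)
  then show ?thesis using K by linarith
qed

end
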